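(* Let $P,Q$ be probability measures on $\mathbb{R}^d$ with $P\ll Q$ and $Q\ll P$, and let $\alpha\in\mathbb{R}\setminus\{0,1\}$. Then $$D_{\alpha}(Q\|P)=\sup_{T:\mathbb{R}^d\to\mathbb{R}}\Big\{\frac{1}{\alpha(1-\alpha)}-\frac{1}{\alpha}E_Q\big[e^{\alpha T}\big]-\frac{1}{1-\alpha}E_P\big[e^{(\alpha-1)T}\big]\Big\},$$ where the supremum is over all measurable $T:\mathbb{R}^d\to\mathbb{R}$ with $E_P[e^{(\alpha-1)T}]<\infty$ and $E_Q[e^{\alpha T}]<\infty$. Equality (attainment of the supremum) holds for $T^*$ satisfying $\frac{dQ}{dP}=e^{-T^*}$.
   Context: The $\alpha$-divergence is $D_{\alpha}(Q\|P)=E_P\Big[\frac{1}{\alpha(\alpha-1)}\Big\{\big(\frac{dQ}{dP}\big)^{1-\alpha}-1\Big\}\Big]$ for $\alpha\in\mathbb{R}\setminus\{0,1\}$. *)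

theory Defs
  imports "HOL-Probability.Probability"
begin

definition dens :: "'a measure \<Rightarrow> 'a measure \<Rightarrow> 'a \<Rightarrow> real" where
  "dens Q P x = enn2real (RN_deriv P Q x)"

text \<open>alpha-divergence D_alpha(Q||P) = E_P[(1/(alpha(alpha-1))) ((dQ/dP)^(1-alpha) - 1)],
  valued in the extended reals: the integrand is integrable when 0 < alpha < 1, and is
  bounded below otherwise, so a non-integrable integrand has expectation +infinity.\<close>
definition alpha_div :: "real \<Rightarrow> 'a measure \<Rightarrow> 'a measure \<Rightarrow> ereal" where
  "alpha_div \<alpha> Q P =
     (let f = (\<lambda>x. (1 / (\<alpha> * (\<alpha> - 1))) * (dens Q P x powr (1 - \<alpha>) - 1))
      in if integrable P f then ereal (integral\<^sup>L P f) else \<infinity>)"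

definition admissible :: "real \<Rightarrow> 'a::euclidean_space measure \<Rightarrow> 'a measure \<Rightarrow> ('a \<Rightarrow> real) set" where
  "admissible \<alpha> Q P = {T. T \<in> borel_measurable borel \<and>
      (\<integral>\<^sup>+ x. ennreal (exp ((\<alpha> - 1) * T x)) \<partial>P) < \<infinity> \<and>
      (\<integral>\<^sup>+ x. ennreal (exp (\<alpha> * T x)) \<partial>Q) < \<infinity>}"

definition var_obj :: "real \<Rightarrow> 'a measure \<Rightarrow> 'a measure \<Rightarrow> ('a \<Rightarrow> real) \<Rightarrow> real" where
  "var_obj \<alpha> Q P T = 1 / (\<alpha> * (1 - \<alpha>)) - (1 / \<alpha>) * (\<integral>x. exp (\<alpha> * T x) \<partial>Q)
      - (1 / (1 - \<alpha>)) * (\<integral>x. exp ((\<alpha> - 1) * T x) \<partial>P)"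

end

theory Submission
  imports Defs
begin


lemma exp_conv: "0 \<le> (t::real) \<Longrightarrow> t \<le> 1 \<Longrightarrow> exp ((1-t)*x + t*y) \<le> (1-t)*exp x + t * exp y"
  using convex_onD[OF exp_convex, of t x y] by simp

lemma bern1: assumes "0 \<le> (p::real)" "p \<le> 1" shows "exp (p*u) \<le> p * exp u + (1-p)"
  using exp_conv[of p 0 u] assms by (simp add: algebra_simps)

lemma bern2: assumes "(p::real) \<ge> 1" shows "exp (p*u) \<ge> p * exp u + (1-p)"
proof -
  have "exp u \<le> (1 - 1/p) * exp 0 + (1/p) * exp (p*u)"
    using exp_conv[of "1/p" 0 "p*u"] assms by simp
  then have "p * exp u \<le> p * ((1 - 1/p) + (1/p) * exp (p*u))" using assms by simp
  also have "\<dots> = p - 1 + exp (p*u)" using assms by (simp add: algebra_simps)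
  finally show ?thesis by simp
qed

lemma bern3: assumes "(p::real) \<le> 0" shows "exp (p*u) \<ge> p * exp u + (1-p)"
proof -
  define q where "q = 1/(1-p)"
  have q: "0 \<le> q" "q \<le> 1" "(1-p)*q = 1" using assms by (auto simp: q_def)
  have "exp((1-q)*u + q*(p*u)) \<le> (1-q)*exp u + q*exp(p*u)"
    using exp_conv[OF q(1,2)] .
  moreover have "(1-q)*u + q*(p*u) = u * (1 - (1-p)*q)" by (simp add: algebra_simps)
  ultimately have "1 \<le> (1-q)*exp u + q*exp(p*u)" using q(3) by simp
  then have "(1-p)*1 \<le> (1-p)*((1-q)*exp u + q*exp(p*u))" using assms by (intro mult_left_mono) auto
  also have "\<dots> = ((1-p) - (1-p)*q)*exp u + ((1-p)*q)*exp(p*u)" by (simp add: algebra_simps)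
  also have "\<dots> = -p * exp u + exp (p*u)" unfolding q(3) by (simp add: algebra_simps)
  finally show ?thesis by simp
qed

definition phi :: "real \<Rightarrow> real \<Rightarrow> real \<Rightarrow> real" where
  "phi a r t = 1 / (a * (1 - a)) - (1 / a) * (r * exp (a * t)) - (1 / (1 - a)) * exp ((a - 1) * t)"

definition fpt :: "real \<Rightarrow> real \<Rightarrow> real" where
  "fpt a r = (1 / (a * (a - 1))) * (r powr (1 - a) - 1)"

lemma alg_id0: "(-c)*(E*Y - 1) - (c - (c*(1-a))*(E*X) - (c*a)*E) = E*c*((1-a)*X + a - Y)" for a c E X Y :: real
  by (simp add: algebra_simps)

lemma alg_id: "(a::real) \<noteq> 0 \<Longrightarrow> a \<noteq> 1 \<Longrightarrow>
  (1/(a*(a-1)))*(E*Y - 1) - (1/(a*(1-a)) - (1/a)*(E*X) - (1/(1-a))*E) = E*(1/(a*(1-a)))*((1-a)*X + a - Y)"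
proof -
  assume "a \<noteq> 0" "a \<noteq> 1"
  then have a1: "a - 1 \<noteq> 0" "1 - a \<noteq> 0" by auto
  define c where "c = 1/(a*(1-a))"
  have h0: "1/(a*(1-a)) = c" by (simp add: c_def)
  have h1: "1/(a*(a-1)) = -c" unfolding c_def using a1 \<open>a \<noteq> 0\<close> by (simp add: field_simps)
  have h2: "1/a = c*(1-a)" unfolding c_def using a1 \<open>a \<noteq> 0\<close> by (simp add: field_simps)
  have h3: "1/(1-a) = c*a" unfolding c_def using a1 \<open>a \<noteq> 0\<close> by (simp add: field_simps)
  show ?thesis unfolding h0 h1 h2 h3 by (rule alg_id0)
qed

lemma phi_eq: assumes "r > 0" "a \<noteq> 0" "a \<noteq> 1"
  shows "fpt a r - phi a r t = exp ((a-1)*t) * (1/(a*(1-a))) * ((1-a) * exp (ln r + t) + a - exp ((1-a)*(ln r + t)))"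
proof -
  have "r = exp (ln r)" using assms by simp
  have 1: "r powr (1-a) = exp ((1-a) * ln r)" using assms by (simp add: powr_def)
  have 2: "r * exp (a*t) = exp ((a-1)*t) * exp (ln r + t)"
  proof -
    have "exp ((a-1)*t) * exp (ln r + t) = exp (ln r + a*t)" by (simp add: exp_add[symmetric] algebra_simps)
    also have "\<dots> = r * exp (a*t)" using assms by (simp add: exp_add)
    finally show ?thesis by simp
  qed
  have 3: "exp ((1-a)*ln r) = exp ((a-1)*t) * exp ((1-a)*(ln r + t))"
  proof -
    have "(a-1)*t + (1-a)*(ln r+t) = (1-a)*ln r" by (simp add: algebra_simps)
    then show ?thesis by (simp only: exp_add[symmetric])
  qed
  have a1: "1 - a \<noteq> 0" "a - 1 \<noteq> 0" using assms by auto
  show ?thesis unfolding fpt_def phi_def 1 2 3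
    by (rule alg_id) (use assms in auto)
qed

lemma phi_le: assumes "r > 0" "a \<noteq> 0" "a \<noteq> 1"
  shows "phi a r t \<le> fpt a r"
proof -
  let ?u = "ln r + t"
  have "0 \<le> (1/(a*(1-a))) * ((1-a) * exp ?u + a - exp ((1-a)*?u))"
  proof (cases "0 < a \<and> a < 1")
    case True
    then have "exp ((1-a)*?u) \<le> (1-a) * exp ?u + (1-(1-a))" by (intro bern1) auto
    then have h: "0 \<le> (1-a) * exp ?u + a - exp ((1-a)*?u)" by simp
    have c: "1/(a*(1-a)) > 0" using True by simp
    show ?thesis by (rule mult_nonneg_nonneg[OF less_imp_le[OF c] h])
  next
    case False
    then have "a < 0 \<or> a > 1" using assms by auto
    then have "exp ((1-a)*?u) \<ge> (1-a) * exp ?u + (1-(1-a))"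
    proof
      assume "a < 0" then show ?thesis by (intro bern2) simp
    next
      assume "a > 1" then show ?thesis by (intro bern3) simp
    qed
    then have h: "(1-a) * exp ?u + a - exp ((1-a)*?u) \<le> 0" by simp
    have c: "1/(a*(1-a)) < 0" using \<open>a < 0 \<or> a > 1\<close>
      by (auto simp: divide_less_0_iff mult_less_0_iff)
    show ?thesis by (rule mult_nonpos_nonpos[OF less_imp_le[OF c] h])
  qed
  then have "0 \<le> exp ((a-1)*t) * ((1/(a*(1-a))) * ((1-a) * exp ?u + a - exp ((1-a)*?u)))"
    by (intro mult_nonneg_nonneg[OF less_imp_le[OF exp_gt_zero]])
  then have "0 \<le> fpt a r - phi a r t" unfolding phi_eq[OF assms]
    by (simp only: mult.assoc)
  then show ?thesis by simp
qed

lemma phi_opt: assumes "r > 0" "a \<noteq> 0" "a \<noteq> 1"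
  shows "phi a r (- ln r) = fpt a r"
  using phi_eq[OF assms, of "- ln r"] by simp

lemma phi_lb: assumes "r > 0" "(a > 1 \<and> r * exp t \<le> 1) \<or> (a < 0 \<and> r * exp t \<ge> 1)"
  shows "phi a r t \<ge> - 1 / (a * (a - 1))"
proof -
  have e: "exp (a*t) = exp ((a-1)*t) * exp t" by (simp add: mult_exp_exp algebra_simps)
  have "phi a r t = - 1 / (a * (a - 1)) + exp ((a-1)*t) * ((1/(a-1)) - (r * exp t)/a)"
    using assms unfolding phi_def e by (auto simp: field_simps)
  moreover have "(1/(a-1)) - (r * exp t)/a \<ge> 0"
    using assms(2)
  proof
    assume h: "a > 1 \<and> r * exp t \<le> 1"
    then have "(r * exp t)/a \<le> 1/a" by (simp add: divide_right_mono)
    also have "\<dots> \<le> 1/(a-1)" using h by (simp add: frac_le)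
    finally show ?thesis by simp
  next
    assume h: "a < 0 \<and> r * exp t \<ge> 1"
    then have "(r * exp t)/a \<le> 1/a" by (simp add: divide_right_mono_neg)
    also have "\<dots> \<le> 1/(a-1)" using h by (simp add: field_simps)
    finally show ?thesis by simp
  qed
  ultimately show ?thesis by simp
qed


lemma bounded_nn:
  assumes "prob_space M" "\<And>x. g x \<le> K"
  shows "(\<integral>\<^sup>+x. ennreal (g x) \<partial>M) < \<infinity>"
proof -
  have "(\<integral>\<^sup>+x. ennreal (g x) \<partial>M) \<le> (\<integral>\<^sup>+x. ennreal K \<partial>M)"
    using assms(2) by (intro nn_integral_mono) (simp add: ennreal_leI)
  also have "\<dots> = ennreal K" using prob_space.emeasure_space_1[OF assms(1)] by simp
  finally show ?thesis by (simp add: le_less_trans)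
qed

context
  fixes P Q :: "'a::euclidean_space measure" and a :: real
  assumes PS: "prob_space P" and QS: "prob_space Q" and sP: "sets P = sets borel" and sQ: "sets Q = sets borel"
   and acQP: "absolutely_continuous Q P" and acPQ: "absolutely_continuous P Q" and a0: "a \<noteq> 0" and a1: "a \<noteq> 1"
begin

lemma measP: "(T :: _ \<Rightarrow> real) \<in> borel_measurable borel \<Longrightarrow> T \<in> borel_measurable P"
  using measurable_cong_sets[OF sP refl, of "borel :: real measure"] by simp

lemma measQ: "(T :: _ \<Rightarrow> real) \<in> borel_measurable borel \<Longrightarrow> T \<in> borel_measurable Q"
  using measurable_cong_sets[OF sQ refl, of "borel :: real measure"] by simp

lemma sQP: "sets Q = sets P" using sP sQ by simp

lemma spP: "space P = UNIV" using sets_eq_imp_space_eq[OF sP] by simp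

lemma dens_meas[measurable]: "dens Q P \<in> borel_measurable P"
  unfolding dens_def by measurable

lemma dens_meas_borel: "dens Q P \<in> borel_measurable borel"
  using dens_meas measurable_cong_sets[OF sP refl, of "borel :: real measure"] by simp

lemma dRN: "density P (RN_deriv P Q) = Q"
proof -
  interpret sigma_finite_measure P using prob_space_imp_sigma_finite[OF PS] .
  show ?thesis by (rule density_RN_deriv[OF acPQ sQP])
qed

lemma RN_fin: "AE x in P. RN_deriv P Q x \<noteq> \<infinity>"
proof -
  interpret sigma_finite_measure P using prob_space_imp_sigma_finite[OF PS] .
  show ?thesis by (rule RN_deriv_finite[OF prob_space_imp_sigma_finite[OF QS] acPQ sQP])
qed

lemma RN_pos: "AE x in P. RN_deriv P Q x \<noteq> 0"
proof -
  define N where "N = {x\<in>space P. RN_deriv P Q x = 0}"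
  have Nm: "N \<in> sets P" unfolding N_def by measurable
  have "emeasure Q N = emeasure (density P (RN_deriv P Q)) N" by (simp add: dRN)
  also have "\<dots> = (\<integral>\<^sup>+x. RN_deriv P Q x * indicator N x \<partial>P)"
    by (rule emeasure_density[OF borel_measurable_RN_deriv Nm])
  also have "\<dots> = (\<integral>\<^sup>+x. 0 \<partial>P)"
    by (intro nn_integral_cong) (auto simp: N_def indicator_def)
  finally have "emeasure Q N = 0" by simp
  moreover have "N \<in> sets Q" using Nm sQP by simp
  ultimately have "N \<in> null_sets Q" by (simp add: null_sets_def)
  then have "N \<in> null_sets P" using acQP unfolding absolutely_continuous_def by auto
  then show ?thesis by (rule AE_I') (auto simp: N_def)
qed

lemma dens_AE: "AE x in P. dens Q P x > 0 \<and> RN_deriv P Q x = ennreal (dens Q P x)"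
  using RN_fin RN_pos
  by eventually_elim (auto simp: dens_def enn2real_positive_iff top.not_eq_extremum zero_less_iff_neq_zero
     intro: ennreal_enn2real[symmetric])

lemma dens_pos: "AE x in P. dens Q P x > 0"
  using dens_AE by eventually_elim auto

lemma dens_density: "density P (\<lambda>x. ennreal (dens Q P x)) = Q"
proof -
  have "density P (\<lambda>x. ennreal (dens Q P x)) = density P (RN_deriv P Q)"
    using dens_AE by (intro density_cong) (auto elim: AE_mp)
  then show ?thesis using dRN by simp
qed

lemma nnQ: "g \<in> borel_measurable P \<Longrightarrow>
   (\<integral>\<^sup>+x. ennreal (g x) \<partial>Q) = (\<integral>\<^sup>+x. ennreal (dens Q P x * g x) \<partial>P)"
proof -
  assume [measurable]: "g \<in> borel_measurable P"
  have "(\<integral>\<^sup>+x. ennreal (g x) \<partial>Q) = (\<integral>\<^sup>+x. ennreal (g x) \<partial>density P (\<lambda>x. ennreal (dens Q P x)))"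
    by (simp add: dens_density)
  also have "\<dots> = (\<integral>\<^sup>+x. ennreal (dens Q P x) * ennreal (g x) \<partial>P)"
    by (rule nn_integral_density) auto
  also have "\<dots> = (\<integral>\<^sup>+x. ennreal (dens Q P x * g x) \<partial>P)"
    by (intro nn_integral_cong) (simp add: ennreal_mult' dens_def)
  finally show ?thesis .
qed

lemma intQ: "g \<in> borel_measurable P \<Longrightarrow>
   integrable Q g = integrable P (\<lambda>x. dens Q P x * g x) \<and>
   integral\<^sup>L Q g = integral\<^sup>L P (\<lambda>x. dens Q P x * g x)"
proof -
  assume [measurable]: "g \<in> borel_measurable P"
  have nn: "AE x in P. 0 \<le> dens Q P x" by (simp add: dens_def)
  have "integrable (density P (\<lambda>x. ennreal (dens Q P x))) g = integrable P (\<lambda>x. dens Q P x * g x)"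
    using integrable_density[of g P "dens Q P"] nn by simp
  moreover have "integral\<^sup>L (density P (\<lambda>x. ennreal (dens Q P x))) g = integral\<^sup>L P (\<lambda>x. dens Q P x * g x)"
    using integral_density[of g P "dens Q P"] nn by simp
  ultimately show ?thesis by (simp add: dens_density)
qed

lemma obj:
  assumes T: "T \<in> admissible a Q P"
  shows "integrable P (\<lambda>x. phi a (dens Q P x) (T x)) \<and>
         var_obj a Q P T = (\<integral>x. phi a (dens Q P x) (T x) \<partial>P)"
proof -
  interpret P: prob_space P by (rule PS)
  have Tb: "T \<in> borel_measurable borel" and f1: "(\<integral>\<^sup>+ x. ennreal (exp ((a - 1) * T x)) \<partial>P) < \<infinity>"
    and f2: "(\<integral>\<^sup>+ x. ennreal (exp (a * T x)) \<partial>Q) < \<infinity>"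
    using T by (auto simp: admissible_def)
  have [measurable]: "T \<in> borel_measurable P" using measP[OF Tb] .
  have TQ[measurable]: "T \<in> borel_measurable Q" using measQ[OF Tb] .
  have i1: "integrable P (\<lambda>x. exp ((a - 1) * T x))"
    by (rule integrableI_nonneg) (use f1 in auto)
  have i2Q: "integrable Q (\<lambda>x. exp (a * T x))"
    by (rule integrableI_nonneg) (use f2 in auto)
  have g: "(\<lambda>x. exp (a * T x)) \<in> borel_measurable P" by measurable
  have i2: "integrable P (\<lambda>x. dens Q P x * exp (a * T x))"
    and e2: "(\<integral>x. exp (a * T x) \<partial>Q) = (\<integral>x. dens Q P x * exp (a * T x) \<partial>P)"
    using intQ[OF g] i2Q by auto
  have eq: "(\<lambda>x. phi a (dens Q P x) (T x)) = (\<lambda>x. 1 / (a * (1 - a)) - (1 / a) * (dens Q P x * exp (a * T x)) - (1 / (1 - a)) * exp ((a - 1) * T x))"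
    by (simp add: phi_def)
  have ii: "integrable P (\<lambda>x. 1 / (a * (1 - a)) - (1 / a) * (dens Q P x * exp (a * T x)) - (1 / (1 - a)) * exp ((a - 1) * T x))"
    using i1 i2 by auto
  have "(\<integral>x. 1 / (a * (1 - a)) - (1 / a) * (dens Q P x * exp (a * T x)) - (1 / (1 - a)) * exp ((a - 1) * T x) \<partial>P)
      = 1 / (a * (1 - a)) - (1 / a) * (\<integral>x. dens Q P x * exp (a * T x) \<partial>P) - (1 / (1 - a)) * (\<integral>x. exp ((a - 1) * T x) \<partial>P)"
    using i1 i2 by (simp add: P.prob_space)
  then show ?thesis unfolding eq var_obj_def e2 using ii by simp
qed


lemma F_meas[measurable]: "(\<lambda>x. fpt a (dens Q P x)) \<in> borel_measurable P"
  unfolding fpt_def by measurable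

lemma phi_meas: assumes [measurable]: "T \<in> borel_measurable P" shows "(\<lambda>x. phi a (dens Q P x) (T x)) \<in> borel_measurable P"
  unfolding phi_def by measurable

lemma adm_meas: assumes "T \<in> admissible a Q P" shows "T \<in> borel_measurable P"
proof -
  have "T \<in> borel_measurable borel" using assms unfolding admissible_def by blast
  then show ?thesis by (rule measP)
qed

lemma ad_eq: "alpha_div a Q P = (if integrable P (\<lambda>x. fpt a (dens Q P x))
   then ereal (\<integral>x. fpt a (dens Q P x) \<partial>P) else \<infinity>)"
  by (simp add: alpha_div_def fpt_def Let_def)

lemma attain:
  assumes Tb: "T \<in> borel_measurable borel" and ae: "AE x in P. dens Q P x = exp (- T x)"
    and T: "T \<in> admissible a Q P"
  shows "integrable P (\<lambda>x. fpt a (dens Q P x)) \<and> alpha_div a Q P = ereal (var_obj a Q P T)"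
proof -
  have Tm[measurable]: "T \<in> borel_measurable P" using measP[OF Tb] .
  have o: "integrable P (\<lambda>x. phi a (dens Q P x) (T x))" "var_obj a Q P T = (\<integral>x. phi a (dens Q P x) (T x) \<partial>P)"
    using obj[OF T] by auto
  have eq: "AE x in P. phi a (dens Q P x) (T x) = fpt a (dens Q P x)"
    using ae
  proof eventually_elim
    case (elim x)
    then have "T x = - ln (dens Q P x)" by simp
    moreover have "dens Q P x > 0" using elim by simp
    ultimately show ?case using phi_opt[of "dens Q P x" a] a0 a1 by simp
  qed
  have i: "integrable P (\<lambda>x. fpt a (dens Q P x))"
    using o(1) integrable_cong_AE[OF phi_meas[OF Tm] F_meas eq] by simp
  have "(\<integral>x. phi a (dens Q P x) (T x) \<partial>P) = (\<integral>x. fpt a (dens Q P x) \<partial>P)"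
    by (rule integral_cong_AE[OF phi_meas[OF Tm] F_meas eq])
  then show ?thesis using i o by (simp add: ad_eq)
qed

lemma int01: assumes "0 < a" "a < 1" shows "integrable P (\<lambda>x. fpt a (dens Q P x))"
proof -
  interpret P: prob_space P by (rule PS)
  interpret Q: prob_space Q by (rule QS)
  have "integrable Q (\<lambda>x. 1::real)" by simp
  then have ir: "integrable P (\<lambda>x. dens Q P x * 1)" using intQ[of "\<lambda>x. 1"] by simp
  have i1: "integrable P (\<lambda>x. 1 + dens Q P x)" using ir by simp
  have ip: "integrable P (\<lambda>x. dens Q P x powr (1 - a))"
  proof (rule Bochner_Integration.integrable_bound[OF i1])
    show "(\<lambda>x. dens Q P x powr (1 - a)) \<in> borel_measurable P" by measurable
    show "AE x in P. norm (dens Q P x powr (1 - a)) \<le> norm (1 + dens Q P x)"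
    proof (rule AE_I2)
      fix x
      have r0: "dens Q P x \<ge> 0" by (simp add: dens_def)
      have "dens Q P x powr (1 - a) \<le> 1 + dens Q P x"
      proof (cases "dens Q P x \<le> 1")
        case True
        then have "dens Q P x powr (1 - a) \<le> 1" using r0 assms by (intro powr_le1) auto
        then show ?thesis using r0 by simp
      next
        case False
        then have "dens Q P x powr (1 - a) \<le> dens Q P x powr 1" using assms by (intro powr_mono) auto
        then show ?thesis using False by simp
      qed
      then show "norm (dens Q P x powr (1 - a)) \<le> norm (1 + dens Q P x)" using r0 by simp
    qed
  qed
  have "integrable P (\<lambda>x. dens Q P x powr (1 - a) - 1)"
    by (rule Bochner_Integration.integrable_diff[OF ip P.integrable_const])
  then show ?thesis unfolding fpt_def by (rule integrable_mult_right)
qed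

lemma sup_le:
  assumes "integrable P (\<lambda>x. fpt a (dens Q P x))"
  shows "(SUP T\<in>admissible a Q P. ereal (var_obj a Q P T)) \<le> ereal (\<integral>x. fpt a (dens Q P x) \<partial>P)"
proof (rule SUP_least)
  fix T assume T: "T \<in> admissible a Q P"
  have o: "integrable P (\<lambda>x. phi a (dens Q P x) (T x))" "var_obj a Q P T = (\<integral>x. phi a (dens Q P x) (T x) \<partial>P)"
    using obj[OF T] by auto
  have "(\<integral>x. phi a (dens Q P x) (T x) \<partial>P) \<le> (\<integral>x. fpt a (dens Q P x) \<partial>P)"
    using o(1) assms
  proof (rule integral_mono_AE)
    show "AE x in P. phi a (dens Q P x) (T x) \<le> fpt a (dens Q P x)"
      using dens_pos by eventually_elim (use a0 a1 phi_le in auto)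
  qed
  then show "ereal (var_obj a Q P T) \<le> ereal (\<integral>x. fpt a (dens Q P x) \<partial>P)" using o by simp
qed

lemma Tstar_adm:
  assumes i: "integrable P (\<lambda>x. fpt a (dens Q P x))"
  shows "(\<lambda>x. - ln (dens Q P x)) \<in> admissible a Q P"
proof -
  interpret P: prob_space P by (rule PS)
  have ip: "integrable P (\<lambda>x. a * (a - 1) * fpt a (dens Q P x) + 1)"
    by (rule Bochner_Integration.integrable_add[OF integrable_mult_right[OF i] P.integrable_const])
  have e: "a * (a - 1) * fpt a r + 1 = r powr (1 - a)" for r
    using a0 a1 by (simp add: fpt_def)
  have ip2: "integrable P (\<lambda>x. dens Q P x powr (1 - a))" using ip unfolding e .
  have fin: "(\<integral>\<^sup>+x. ennreal (dens Q P x powr (1 - a)) \<partial>P) < \<infinity>"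
    using nn_integral_eq_integral[OF ip2] by simp
  have m: "(\<lambda>x. - ln (dens Q P x)) \<in> borel_measurable borel"
    using dens_meas_borel by measurable
  have 1: "(\<integral>\<^sup>+x. ennreal (exp ((a - 1) * - ln (dens Q P x))) \<partial>P) = (\<integral>\<^sup>+x. ennreal (dens Q P x powr (1 - a)) \<partial>P)"
    using dens_pos
  proof (intro nn_integral_cong_AE, eventually_elim)
    case (elim x)
    then show ?case by (simp add: powr_def algebra_simps)
  qed
  have "(\<integral>\<^sup>+x. ennreal (exp (a * - ln (dens Q P x))) \<partial>Q) = (\<integral>\<^sup>+x. ennreal (dens Q P x * exp (a * - ln (dens Q P x))) \<partial>P)"
    by (rule nnQ) measurable
  also have "\<dots> = (\<integral>\<^sup>+x. ennreal (dens Q P x powr (1 - a)) \<partial>P)"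
    using dens_pos
  proof (intro nn_integral_cong_AE, eventually_elim)
    case (elim x)
    then have "dens Q P x * exp (a * - ln (dens Q P x)) = exp (ln (dens Q P x)) * exp (a * - ln (dens Q P x))"
      by (subst exp_ln) (use elim in auto)
    also have "\<dots> = exp (ln (dens Q P x) + a * - ln (dens Q P x))" by (rule exp_add[symmetric])
    also have "\<dots> = dens Q P x powr (1 - a)" using elim by (simp add: powr_def algebra_simps)
    finally show ?case by simp
  qed
  finally have 2: "(\<integral>\<^sup>+x. ennreal (exp (a * - ln (dens Q P x))) \<partial>Q) = (\<integral>\<^sup>+x. ennreal (dens Q P x powr (1 - a)) \<partial>P)" .
  show ?thesis unfolding admissible_def
  proof (intro CollectI conjI)
    show "(\<lambda>x. - ln (dens Q P x)) \<in> borel_measurable borel" by (rule m)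
    show "(\<integral>\<^sup>+x. ennreal (exp ((a - 1) * - ln (dens Q P x))) \<partial>P) < \<infinity>" by (subst 1) (rule fin)
    show "(\<integral>\<^sup>+x. ennreal (exp (a * - ln (dens Q P x))) \<partial>Q) < \<infinity>" by (subst 2) (rule fin)
  qed
qed


lemma sup_inf:
  assumes ni: "\<not> integrable P (\<lambda>x. fpt a (dens Q P x))"
    and adm: "\<And>n. Tn n \<in> admissible a Q P"
    and lb: "\<And>n. AE x in P. - (1/(a*(a-1))) \<le> phi a (dens Q P x) (Tn n x)"
    and ev: "AE x in P. eventually (\<lambda>n. phi a (dens Q P x) (Tn n x) = fpt a (dens Q P x)) sequentially"
  shows "(SUP T\<in>admissible a Q P. ereal (var_obj a Q P T)) = \<infinity>"
proof (rule ccontr)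
  interpret P: prob_space P by (rule PS)
  define C where "C = 1/(a*(a-1))"
  define S where "S = (SUP T\<in>admissible a Q P. ereal (var_obj a Q P T))"
  assume "(SUP T\<in>admissible a Q P. ereal (var_obj a Q P T)) \<noteq> \<infinity>"
  then have ne: "S \<noteq> \<infinity>" by (simp add: S_def)
  have le: "ereal (var_obj a Q P (Tn n)) \<le> S" for n
    unfolding S_def using adm by (intro SUP_upper)
  then have "S \<noteq> -\<infinity>" by (metis MInfty_neq_ereal(1) ereal_infty_less_eq(2))
  with ne obtain m where m: "S = ereal m" by (cases S) auto
  have M: "var_obj a Q P (Tn n) \<le> m" for n using le[of n] m by simp
  define u where "u n x = ennreal (phi a (dens Q P x) (Tn n x) + C)" for n x
  have Tm[measurable]: "Tn n \<in> borel_measurable P" for n using adm_meas[OF adm] .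
  have um: "u n \<in> borel_measurable P" for n unfolding u_def phi_def by measurable
  have iu: "(\<integral>\<^sup>+x. u n x \<partial>P) \<le> ennreal (m + C)" for n
  proof -
    have o: "integrable P (\<lambda>x. phi a (dens Q P x) (Tn n x))" "var_obj a Q P (Tn n) = (\<integral>x. phi a (dens Q P x) (Tn n x) \<partial>P)"
      using obj[OF adm[of n]] by auto
    have i: "integrable P (\<lambda>x. phi a (dens Q P x) (Tn n x) + C)"
      by (rule Bochner_Integration.integrable_add[OF o(1) P.integrable_const])
    have nn: "AE x in P. 0 \<le> phi a (dens Q P x) (Tn n x) + C"
      using lb[of n] by eventually_elim (simp add: C_def)
    have "(\<integral>\<^sup>+x. u n x \<partial>P) = ennreal (\<integral>x. phi a (dens Q P x) (Tn n x) + C \<partial>P)"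
      unfolding u_def by (rule nn_integral_eq_integral[OF i nn])
    also have "(\<integral>x. phi a (dens Q P x) (Tn n x) + C \<partial>P) = var_obj a Q P (Tn n) + C"
      using o by (simp add: P.prob_space)
    finally show ?thesis using M[of n] by (simp add: ennreal_leI)
  qed
  have lim: "AE x in P. liminf (\<lambda>n. u n x) = ennreal (fpt a (dens Q P x) + C)"
    using ev
  proof eventually_elim
    case (elim x)
    then have "eventually (\<lambda>n. u n x = ennreal (fpt a (dens Q P x) + C)) sequentially"
      by eventually_elim (simp add: u_def)
    then have "((\<lambda>n. u n x) \<longlongrightarrow> ennreal (fpt a (dens Q P x) + C)) sequentially"
      by (rule tendsto_eventually)
    then show ?case by (intro lim_imp_Liminf) simp_all
  qed
  have "(\<integral>\<^sup>+x. ennreal (fpt a (dens Q P x) + C) \<partial>P) = (\<integral>\<^sup>+x. liminf (\<lambda>n. u n x) \<partial>P)"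
    using lim by (intro nn_integral_cong_AE) (auto elim: AE_mp)
  also have "\<dots> \<le> liminf (\<lambda>n. integral\<^sup>N P (u n))"
    by (rule nn_integral_liminf[OF um])
  also have "\<dots> \<le> limsup (\<lambda>n. integral\<^sup>N P (u n))"
    by (rule Liminf_le_Limsup) simp
  also have "\<dots> \<le> ennreal (m + C)"
    using iu by (intro Limsup_bounded) simp
  finally have fin: "(\<integral>\<^sup>+x. ennreal (fpt a (dens Q P x) + C) \<partial>P) < \<infinity>"
    by (simp add: le_less_trans)
  have "AE x in P. \<forall>n. - C \<le> phi a (dens Q P x) (Tn n x)"
    using lb by (simp add: AE_all_countable C_def)
  then have nn: "AE x in P. 0 \<le> fpt a (dens Q P x) + C"
    using ev
  proof eventually_elim
    case (elim x)
    then obtain n where n: "phi a (dens Q P x) (Tn n x) = fpt a (dens Q P x)"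
      using eventually_sequentially by auto
    have "- C \<le> phi a (dens Q P x) (Tn n x)" using elim(1) by blast
    with n show ?case by linarith
  qed
  have "integrable P (\<lambda>x. fpt a (dens Q P x) + C)"
    by (rule integrableI_nonneg) (use fin nn in auto)
  then have "integrable P (\<lambda>x. (fpt a (dens Q P x) + C) - C)"
    by (rule Bochner_Integration.integrable_diff[OF _ P.integrable_const])
  then show False using ni by simp
qed

lemma bound_adm:
  assumes Tb: "T \<in> borel_measurable borel" and b1: "\<And>x. (a - 1) * T x \<le> K1" and b2: "\<And>x. a * T x \<le> K2"
  shows "T \<in> admissible a Q P"
proof -
  have "(\<integral>\<^sup>+x. ennreal (exp ((a - 1) * T x)) \<partial>P) < \<infinity>"
    by (rule bounded_nn[OF PS, where K="exp K1"]) (use b1 in simp)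
  moreover have "(\<integral>\<^sup>+x. ennreal (exp (a * T x)) \<partial>Q) < \<infinity>"
    by (rule bounded_nn[OF QS, where K="exp K2"]) (use b2 in simp)
  ultimately show ?thesis using Tb by (simp add: admissible_def)
qed

lemma ev_opt: "0 < r \<Longrightarrow> \<forall>\<^sub>F n in sequentially. T n = - ln r \<Longrightarrow>
   \<forall>\<^sub>F n in sequentially. phi a r (T n) = fpt a r"
  by (erule eventually_mono) (use phi_opt a0 a1 in auto)

lemma gt1_inf:
  assumes "a > 1" "\<not> integrable P (\<lambda>x. fpt a (dens Q P x))"
  shows "(SUP T\<in>admissible a Q P. ereal (var_obj a Q P T)) = \<infinity>"
proof -
  define Tn where "Tn n x = min (ln (real n + 1)) (- ln (dens Q P x))" for n x
  show ?thesis
  proof (rule sup_inf[OF assms(2)])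
    fix n
    have m: "Tn n \<in> borel_measurable borel" unfolding Tn_def using dens_meas_borel by measurable
    have le: "Tn n x \<le> ln (real n + 1)" for x by (simp add: Tn_def)
    show "Tn n \<in> admissible a Q P"
    proof (rule bound_adm[OF m])
      show "(a - 1) * Tn n x \<le> (a - 1) * ln (real n + 1)" for x using le[of x] assms(1) by simp
      show "a * Tn n x \<le> a * ln (real n + 1)" for x using le[of x] assms(1) by simp
    qed
    show "AE x in P. - (1/(a*(a-1))) \<le> phi a (dens Q P x) (Tn n x)"
      using dens_pos
    proof eventually_elim
      case (elim x)
      have "exp (Tn n x) \<le> exp (- ln (dens Q P x))" by (simp add: Tn_def)
      also have "\<dots> = 1 / dens Q P x" using elim by (simp add: exp_minus inverse_eq_divide)
      finally have "dens Q P x * exp (Tn n x) \<le> 1" using elim by (simp add: field_simps)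
      then show ?case using phi_lb[of "dens Q P x" a "Tn n x"] elim assms(1) by simp
    qed
  next
    show "AE x in P. eventually (\<lambda>n. phi a (dens Q P x) (Tn n x) = fpt a (dens Q P x)) sequentially"
      using dens_pos
    proof eventually_elim
      case (elim x)
      obtain N :: nat where N: "exp (- ln (dens Q P x)) \<le> real N" using real_arch_simple by blast
      have "\<forall>\<^sub>F n in sequentially. Tn n x = - ln (dens Q P x)"
        unfolding eventually_sequentially
      proof (intro exI allI impI)
        fix n assume "N \<le> n"
        then have "exp (- ln (dens Q P x)) \<le> real n + 1" using N by simp
        then have "ln (exp (- ln (dens Q P x))) \<le> ln (real n + 1)"
          by (subst ln_le_cancel_iff) auto
        then have "- ln (dens Q P x) \<le> ln (real n + 1)" by simp
        then show "Tn n x = - ln (dens Q P x)" by (simp add: Tn_def)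
      qed
      then show ?case using ev_opt elim by simp
    qed
  qed
qed

lemma lt0_inf:
  assumes "a < 0" "\<not> integrable P (\<lambda>x. fpt a (dens Q P x))"
  shows "(SUP T\<in>admissible a Q P. ereal (var_obj a Q P T)) = \<infinity>"
proof -
  define Tn where "Tn n x = max (- ln (real n + 1)) (- ln (dens Q P x))" for n x
  show ?thesis
  proof (rule sup_inf[OF assms(2)])
    fix n
    have m: "Tn n \<in> borel_measurable borel" unfolding Tn_def using dens_meas_borel by measurable
    have le: "- ln (real n + 1) \<le> Tn n x" for x by (simp add: Tn_def)
    show "Tn n \<in> admissible a Q P"
    proof (rule bound_adm[OF m])
      show "(a - 1) * Tn n x \<le> (a - 1) * - ln (real n + 1)" for x
        using le[of x] assms(1) by (intro mult_left_mono_neg) auto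
      show "a * Tn n x \<le> a * - ln (real n + 1)" for x
        using le[of x] assms(1) by (intro mult_left_mono_neg) auto
    qed
    show "AE x in P. - (1/(a*(a-1))) \<le> phi a (dens Q P x) (Tn n x)"
      using dens_pos
    proof eventually_elim
      case (elim x)
      have "1 / dens Q P x = exp (- ln (dens Q P x))" using elim by (simp add: exp_minus inverse_eq_divide)
      also have "\<dots> \<le> exp (Tn n x)" by (simp add: Tn_def)
      finally have "dens Q P x * exp (Tn n x) \<ge> 1" using elim by (simp add: field_simps)
      then show ?case using phi_lb[of "dens Q P x" a "Tn n x"] elim assms(1) by simp
    qed
  next
    show "AE x in P. eventually (\<lambda>n. phi a (dens Q P x) (Tn n x) = fpt a (dens Q P x)) sequentially"
      using dens_pos
    proof eventually_elim
      case (elim x)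
      obtain N :: nat where N: "dens Q P x \<le> real N" using real_arch_simple by blast
      have "\<forall>\<^sub>F n in sequentially. Tn n x = - ln (dens Q P x)"
        unfolding eventually_sequentially
      proof (intro exI allI impI)
        fix n assume "N \<le> n"
        then have "dens Q P x \<le> real n + 1" using N by simp
        then have "ln (dens Q P x) \<le> ln (real n + 1)" using elim by simp
        then show "Tn n x = - ln (dens Q P x)" by (simp add: Tn_def)
      qed
      then show ?case using ev_opt elim by simp
    qed
  qed
qed

lemma main1: "alpha_div a Q P = (SUP T\<in>admissible a Q P. ereal (var_obj a Q P T))"
proof (cases "integrable P (\<lambda>x. fpt a (dens Q P x))")
  case True
  have ts: "(\<lambda>x. - ln (dens Q P x)) \<in> admissible a Q P" by (rule Tstar_adm[OF True])
  have ae: "AE x in P. dens Q P x = exp (- (- ln (dens Q P x)))"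
    using dens_pos by eventually_elim simp
  have m: "(\<lambda>x. - ln (dens Q P x)) \<in> borel_measurable borel" using dens_meas_borel by measurable
  have eq: "alpha_div a Q P = ereal (var_obj a Q P (\<lambda>x. - ln (dens Q P x)))"
    using attain[OF m ae ts] by simp
  have "alpha_div a Q P \<le> (SUP T\<in>admissible a Q P. ereal (var_obj a Q P T))"
    unfolding eq using ts by (rule SUP_upper)
  moreover have "(SUP T\<in>admissible a Q P. ereal (var_obj a Q P T)) \<le> alpha_div a Q P"
    using sup_le[OF True] True by (simp add: ad_eq)
  ultimately show ?thesis by (rule antisym)
next
  case False
  have "\<not> (0 < a \<and> a < 1)" using int01 False by blast
  then have "a > 1 \<or> a < 0" using a0 a1 by auto
  then have "(SUP T\<in>admissible a Q P. ereal (var_obj a Q P T)) = \<infinity>"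
    using gt1_inf[OF _ False] lt0_inf[OF _ False] by blast
  then show ?thesis using False by (simp add: ad_eq)
qed

end

theorem proposition1:
  fixes P Q :: "'a::euclidean_space measure" and \<alpha> :: real
  assumes "prob_space P" and "prob_space Q"
    and "sets P = sets borel" and "sets Q = sets borel"
    and "absolutely_continuous Q P" and "absolutely_continuous P Q"
    and "\<alpha> \<noteq> 0" and "\<alpha> \<noteq> 1"
  shows "alpha_div \<alpha> Q P = (SUP T \<in> admissible \<alpha> Q P. ereal (var_obj \<alpha> Q P T)) \<and>
         (\<forall>T. T \<in> borel_measurable borel \<longrightarrow> (AE x in P. dens Q P x = exp (- T x)) \<longrightarrow>
           T \<in> admissible \<alpha> Q P \<longrightarrow> alpha_div \<alpha> Q P = ereal (var_obj \<alpha> Q P T))"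
proof (intro conjI allI impI)
  show "alpha_div \<alpha> Q P = (SUP T \<in> admissible \<alpha> Q P. ereal (var_obj \<alpha> Q P T))"
    by (rule main1[OF assms])
next
  fix T :: "'a \<Rightarrow> real"
  assume h: "T \<in> borel_measurable borel" "AE x in P. dens Q P x = exp (- T x)" "T \<in> admissible \<alpha> Q P"
  show "alpha_div \<alpha> Q P = ereal (var_obj \<alpha> Q P T)"
    using attain[OF assms h] by blast
qed

end
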